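(* Let $X\ge 0$ be a gamble and let $\underline{P}$ be a 2-coherent lower prevision (defined on a domain containing the gambles involved) with conjugate upper prevision $\overline{P}$. Then $[\underline{P}(X)]^2\le\underline{P}(X^2)$ and $[\overline{P}(X)]^2\le\overline{P}(X^2)$.
   Context: $\Pi$ is a partition of the sure event into pairwise disjoint non-impossible events; a gamble is a bounded map $X:\Pi\to\mathbb{R}$. A lower prevision $\underline{P}:\mathcal{D}\to\mathbb{R}$ is 2-coherent iff for all $X_0,X_1\in\mathcal{D}$, $s_1\ge 0$, $s_0\in\mathbb{R}$, $\sup[s_1(X_1-\underline{P}(X_1))-s_0(X_0-\underline{P}(X_0))]\ge 0$; its conjugate is $\overline{P}(Y)=-\underline{P}(-Y)$. *)

theory Defs
  imports Complex_Main
begin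

text \<open>The partition \<Pi> is modelled by the type 'w (elements = atoms of the partition).
  A gamble is a bounded real map on \<Pi>.\<close>

definition gamble :: "('w \<Rightarrow> real) \<Rightarrow> bool" where
  "gamble X \<longleftrightarrow> bdd_above (range X) \<and> bdd_below (range X)"

definition coherent2 :: "('w \<Rightarrow> real) set \<Rightarrow> (('w \<Rightarrow> real) \<Rightarrow> real) \<Rightarrow> bool" where
  "coherent2 D P \<longleftrightarrow>
     (\<forall>X0\<in>D. \<forall>X1\<in>D. \<forall>s1 s0::real. s1 \<ge> 0 \<longrightarrow>
        (SUP w. s1 * (X1 w - P X1) - s0 * (X0 w - P X0)) \<ge> 0)"

definition upper :: "(('w \<Rightarrow> real) \<Rightarrow> real) \<Rightarrow> ('w \<Rightarrow> real) \<Rightarrow> real" where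
  "upper P Y = - P (\<lambda>w. - Y w)"

end

theory Submission
  imports Defs
begin

lemma sup_le: "(\<And>w. f w \<le> (M::real)) \<Longrightarrow> (SUP w. f w) \<le> M"
  by (rule cSUP_least) auto

theorem corollary3:
  fixes X :: "'w \<Rightarrow> real" and D :: "('w \<Rightarrow> real) set" and P :: "('w \<Rightarrow> real) \<Rightarrow> real"
  assumes "gamble X" and "\<forall>w. X w \<ge> 0"
    and "\<forall>Y\<in>D. gamble Y"
    and "coherent2 D P"
  shows "(X \<in> D \<and> (\<lambda>w. (X w)\<^sup>2) \<in> D \<longrightarrow> (P X)\<^sup>2 \<le> P (\<lambda>w. (X w)\<^sup>2))
       \<and> ((\<lambda>w. - X w) \<in> D \<and> (\<lambda>w. - ((X w)\<^sup>2)) \<in> D \<longrightarrow>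
            (upper P X)\<^sup>2 \<le> upper P (\<lambda>w. (X w)\<^sup>2))"
proof (intro conjI impI)
  have C: "\<And>X0 X1 s1 s0. X0 \<in> D \<Longrightarrow> X1 \<in> D \<Longrightarrow> s1 \<ge> 0 \<Longrightarrow>
      (SUP w. s1 * (X1 w - P X1) - s0 * (X0 w - P X0)) \<ge> 0"
    using assms(4) unfolding coherent2_def by blast
  assume h: "X \<in> D \<and> (\<lambda>w. (X w)\<^sup>2) \<in> D"
  define a where "a = P X"
  define q where "q = P (\<lambda>w. (X w)\<^sup>2)"
  have a0: "a \<ge> 0"
  proof (rule ccontr)
    assume "\<not> a \<ge> 0"
    have "(SUP w. 0 * (X w - P X) - 1 * (X w - P X)) \<le> a"
      by (rule sup_le) (use assms(2) in \<open>auto simp: a_def\<close>)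
    moreover have "(SUP w. 0 * (X w - P X) - 1 * (X w - P X)) \<ge> 0"
      using C[of X X 0 1] h by auto
    ultimately show False using \<open>\<not> a \<ge> 0\<close> by linarith
  qed
  have "(SUP w. (2*a) * (X w - P X) - 1 * ((X w)\<^sup>2 - P (\<lambda>w. (X w)\<^sup>2))) \<le> q - a\<^sup>2"
  proof (rule sup_le)
    fix w
    have "0 \<le> (X w - a)\<^sup>2" by simp
    then show "(2*a) * (X w - P X) - 1 * ((X w)\<^sup>2 - P (\<lambda>w. (X w)\<^sup>2)) \<le> q - a\<^sup>2"
      by (simp add: a_def q_def power2_eq_square algebra_simps)
  qed
  moreover have "(SUP w. (2*a) * (X w - P X) - 1 * ((X w)\<^sup>2 - P (\<lambda>w. (X w)\<^sup>2))) \<ge> 0"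
    using C[of "\<lambda>w. (X w)\<^sup>2" X "2*a" 1] h a0 by auto
  ultimately show "(P X)\<^sup>2 \<le> P (\<lambda>w. (X w)\<^sup>2)" unfolding a_def q_def by linarith
next
  have C: "\<And>X0 X1 s1 s0. X0 \<in> D \<Longrightarrow> X1 \<in> D \<Longrightarrow> s1 \<ge> 0 \<Longrightarrow>
      (SUP w. s1 * (X1 w - P X1) - s0 * (X0 w - P X0)) \<ge> 0"
    using assms(4) unfolding coherent2_def by blast
  assume h: "(\<lambda>w. - X w) \<in> D \<and> (\<lambda>w. - ((X w)\<^sup>2)) \<in> D"
  define b where "b = upper P X"
  define c where "c = upper P (\<lambda>w. (X w)\<^sup>2)"
  have "(SUP w. 1 * (- ((X w)\<^sup>2) - P (\<lambda>w. - ((X w)\<^sup>2))) - (2*b) * (- X w - P (\<lambda>w. - X w))) \<le> c - b\<^sup>2"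
  proof (rule sup_le)
    fix w
    have "0 \<le> (X w - b)\<^sup>2" by simp
    then show "1 * (- ((X w)\<^sup>2) - P (\<lambda>w. - ((X w)\<^sup>2))) - (2*b) * (- X w - P (\<lambda>w. - X w)) \<le> c - b\<^sup>2"
      by (simp add: b_def c_def upper_def power2_eq_square algebra_simps)
  qed
  moreover have "(SUP w. 1 * (- ((X w)\<^sup>2) - P (\<lambda>w. - ((X w)\<^sup>2))) - (2*b) * (- X w - P (\<lambda>w. - X w))) \<ge> 0"
    using C[of "\<lambda>w. - X w" "\<lambda>w. - ((X w)\<^sup>2)" 1 "2*b"] h by auto
  ultimately show "(upper P X)\<^sup>2 \<le> upper P (\<lambda>w. (X w)\<^sup>2)" unfolding b_def c_def by linarith
qed

end
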